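(* $\mathrm{sdi\text{-}dist}$ is a semantic distance metric for CQs, and in fact an ultrametric, i.e., for all CQs $q_1,q_2,q_3$ of the same arity, $\mathrm{sdi\text{-}dist}(q_1,q_3)\le\max(\mathrm{sdi\text{-}dist}(q_1,q_2),\mathrm{sdi\text{-}dist}(q_2,q_3))$.
   Context: CQs are $q(x_1,\dots,x_k)\text{ :- }\alpha_1,\dots,\alpha_n$ (relational atoms, no constants, each answer variable occurring in an atom); $q(I)$ is the answer set on a finite database instance $I$; $q_1,q_2$ are equivalent if $q_1(I)=q_2(I)$ for all $I$. For CQs $q_1,q_2$ of the same arity, $\mathrm{sdi\text{-}dist}(q_1,q_2)=1/n$ where $n$ is the minimum number of facts of an instance $I$ with $q_1(I)\ne q_2(I)$, and $\mathrm{sdi\text{-}dist}(q_1,q_2)=0$ if no such instance exists. A semantic distance metric for CQs is a function $\mathrm{dist}$ from pairs of same-arity CQs to non-negative reals with $\mathrm{dist}(q_1,q_2)=\mathrm{dist}(q_2,q_1)$; $\mathrm{dist}(q_1,q_2)=0$ iff $q_1,q_2$ are equivalent; and $\mathrm{dist}(q_1,q_2)\le\mathrm{dist}(q_1,q_3)+\mathrm{dist}(q_3,q_2)$. *)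

theory Defs
  imports Main Complex_Main
begin

text \<open>An atom is a relation symbol applied to a tuple of variables (no constants).\<close>

type_synonym ('r, 'v) atom = "'r \<times> 'v list"

datatype ('r, 'v) cq = CQ (ans: "'v list") (body: "('r, 'v) atom list")

definition wf_cq :: "('r, 'v) cq \<Rightarrow> bool" where
  "wf_cq q \<longleftrightarrow> body q \<noteq> [] \<and>
     set (ans q) \<subseteq> (\<Union>a \<in> set (body q). set (snd a))"

definition cq_arity :: "('r, 'v) cq \<Rightarrow> nat" where
  "cq_arity q = length (ans q)"

type_synonym ('r, 'c) fact = "'r \<times> 'c list"

definition answers :: "('r, 'v) cq \<Rightarrow> ('r, 'c) fact set \<Rightarrow> 'c list set" where
  "answers q I = {map h (ans q) | h. \<forall>a \<in> set (body q). (fst a, map h (snd a)) \<in> I}"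

definition cq_equivalent :: "'c itself \<Rightarrow> ('r, 'v) cq \<Rightarrow> ('r, 'v) cq \<Rightarrow> bool" where
  "cq_equivalent (_ :: 'c itself) q1 q2 \<longleftrightarrow>
     (\<forall>I :: ('r, 'c) fact set. finite I \<longrightarrow> answers q1 I = answers q2 I)"

definition distinguishes :: "('r, 'v) cq \<Rightarrow> ('r, 'v) cq \<Rightarrow> ('r, 'c) fact set \<Rightarrow> bool" where
  "distinguishes q1 q2 I \<longleftrightarrow> finite I \<and> answers q1 I \<noteq> answers q2 I"

definition sdi_dist :: "'c itself \<Rightarrow> ('r, 'v) cq \<Rightarrow> ('r, 'v) cq \<Rightarrow> real" where
  "sdi_dist (_ :: 'c itself) q1 q2 =
     (if \<exists>I :: ('r, 'c) fact set. distinguishes q1 q2 I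
      then 1 / real (LEAST n. \<exists>I :: ('r, 'c) fact set. distinguishes q1 q2 I \<and> card I = n)
      else 0)"

definition semantic_distance_metric ::
  "'c itself \<Rightarrow> (('r, 'v) cq \<Rightarrow> ('r, 'v) cq \<Rightarrow> real) \<Rightarrow> bool" where
  "semantic_distance_metric C d \<longleftrightarrow>
     (\<forall>q1 q2. wf_cq q1 \<and> wf_cq q2 \<and> cq_arity q1 = cq_arity q2 \<longrightarrow>
        d q1 q2 \<ge> 0 \<and>
        d q1 q2 = d q2 q1 \<and>
        (d q1 q2 = 0 \<longleftrightarrow> cq_equivalent C q1 q2)) \<and>
     (\<forall>q1 q2 q3. wf_cq q1 \<and> wf_cq q2 \<and> wf_cq q3 \<and>
        cq_arity q1 = cq_arity q2 \<and> cq_arity q3 = cq_arity q1 \<longrightarrow>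
        d q1 q2 \<le> d q1 q3 + d q3 q2)"

end

theory Submission
  imports Defs
begin

lemma answers_empty:
  assumes "wf_cq q"
  shows "answers q ({} :: ('r,'c) fact set) = {}"
  using assms unfolding wf_cq_def answers_def by (cases "body q") auto

lemma dist_card_pos:
  fixes q1 q2 :: "('r,'v) cq"
  assumes "wf_cq q1" "wf_cq q2" "distinguishes q1 q2 (I :: ('r,'c) fact set)"
  shows "card I \<ge> 1"
proof (rule ccontr)
  assume "\<not> card I \<ge> 1"
  hence "card I = 0" by simp
  hence "I = {}" using assms(3) unfolding distinguishes_def by simp
  thus False using assms answers_empty[of q1] answers_empty[of q2]
    unfolding distinguishes_def by auto
qed

lemma sdi_le:
  fixes q1 q2 :: "('r,'v) cq"
  assumes "wf_cq q1" "wf_cq q2" "distinguishes q1 q2 (I :: ('r,'c) fact set)"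
  shows "1 / real (card I) \<le> sdi_dist TYPE('c) q1 q2"
proof -
  let ?P = "\<lambda>n. \<exists>I :: ('r, 'c) fact set. distinguishes q1 q2 I \<and> card I = n"
  have e: "\<exists>I :: ('r, 'c) fact set. distinguishes q1 q2 I" using assms(3) by blast
  have pI: "?P (card I)" using assms(3) by blast
  have l1: "(LEAST n. ?P n) \<le> card I" by (rule Least_le[of ?P, OF pI])
  have "?P (LEAST n. ?P n)" by (rule LeastI[of ?P, OF pI])
  then obtain J :: "('r,'c) fact set" where J: "distinguishes q1 q2 J" "card J = (LEAST n. ?P n)" by blast
  have l2: "(LEAST n. ?P n) \<ge> 1" using dist_card_pos[OF assms(1,2) J(1)] J(2) by simp
  have "1 / real (card I) \<le> 1 / real (LEAST n. ?P n)"
    using l1 l2 by (simp add: frac_le)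
  moreover have "sdi_dist TYPE('c) q1 q2 = 1 / real (LEAST n. ?P n)"
    unfolding sdi_dist_def by (rule if_P[OF e])
  ultimately show ?thesis by (simp only:)
qed

lemma sdi_eq:
  fixes q1 q2 :: "('r,'v) cq"
  assumes "\<exists>I :: ('r, 'c) fact set. distinguishes q1 q2 I"
  shows "\<exists>I :: ('r, 'c) fact set. distinguishes q1 q2 I \<and> sdi_dist TYPE('c) q1 q2 = 1 / real (card I)"
proof -
  let ?P = "\<lambda>n. \<exists>I :: ('r, 'c) fact set. distinguishes q1 q2 I \<and> card I = n"
  obtain I0 :: "('r,'c) fact set" where "distinguishes q1 q2 I0" using assms by blast
  hence pI: "?P (card I0)" by blast
  have "?P (LEAST n. ?P n)" by (rule LeastI[of ?P, OF pI])
  then obtain J :: "('r,'c) fact set" where J: "distinguishes q1 q2 J" "card J = (LEAST n. ?P n)" by blast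
  have "sdi_dist TYPE('c) q1 q2 = 1 / real (LEAST n. ?P n)"
    unfolding sdi_dist_def by (rule if_P[OF assms])
  hence "sdi_dist TYPE('c) q1 q2 = 1 / real (card J)" using J(2) by (simp only:)
  thus ?thesis using J(1) by blast
qed

lemma sdi_nonneg: "sdi_dist C q1 q2 \<ge> 0"
  unfolding sdi_dist_def by auto

lemma sdi_sym: fixes q1 q2 :: "('r,'v) cq" shows "sdi_dist TYPE('c) q1 q2 = sdi_dist TYPE('c) q2 q1"
proof -
  have eq: "(distinguishes q1 q2 :: ('r,'c) fact set \<Rightarrow> bool) = distinguishes q2 q1"
    unfolding distinguishes_def fun_eq_iff by auto
  show ?thesis unfolding sdi_dist_def by (simp only: eq)
qed

lemma sdi_zero:
  fixes q1 q2 :: "('r,'v) cq"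
  assumes "wf_cq q1" "wf_cq q2"
  shows "sdi_dist TYPE('c) q1 q2 = 0 \<longleftrightarrow> cq_equivalent TYPE('c) q1 q2"
proof
  assume z: "sdi_dist TYPE('c) q1 q2 = 0"
  show "cq_equivalent TYPE('c) q1 q2"
  proof (rule ccontr)
    assume "\<not> cq_equivalent TYPE('c) q1 q2"
    then obtain I :: "('r,'c) fact set" where "distinguishes q1 q2 I"
      unfolding cq_equivalent_def distinguishes_def by auto
    from sdi_le[OF assms this] dist_card_pos[OF assms this] z show False by simp
  qed
next
  assume "cq_equivalent TYPE('c) q1 q2"
  hence "\<not> (\<exists>I :: ('r,'c) fact set. distinguishes q1 q2 I)"
    unfolding cq_equivalent_def distinguishes_def by auto
  thus "sdi_dist TYPE('c) q1 q2 = 0" unfolding sdi_dist_def by (rule if_not_P)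
qed

lemma sdi_ultra:
  fixes q1 q2 q3 :: "('r,'v) cq"
  assumes "wf_cq q1" "wf_cq q2" "wf_cq q3"
  shows "sdi_dist TYPE('c) q1 q3 \<le> max (sdi_dist TYPE('c) q1 q2) (sdi_dist TYPE('c) q2 q3)"
proof (cases "\<exists>I :: ('r, 'c) fact set. distinguishes q1 q3 I")
  case True
  then obtain I :: "('r,'c) fact set" where I: "distinguishes q1 q3 I"
    "sdi_dist TYPE('c) q1 q3 = 1 / real (card I)" using sdi_eq by blast
  have "distinguishes q1 q2 I \<or> distinguishes q2 q3 I"
    using I(1) unfolding distinguishes_def by auto
  thus ?thesis
  proof
    assume "distinguishes q1 q2 I"
    from sdi_le[OF assms(1,2) this] I(2) show ?thesis by linarith
  next
    assume "distinguishes q2 q3 I"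
    from sdi_le[OF assms(2,3) this] I(2) show ?thesis by linarith
  qed
next
  case False
  hence "sdi_dist TYPE('c) q1 q3 = 0" unfolding sdi_dist_def by (rule if_not_P)
  thus ?thesis using sdi_nonneg[of "TYPE('c)" q1 q2] by linarith
qed

theorem proposition44:
  assumes "infinite (UNIV :: 'c set)"
  shows "semantic_distance_metric TYPE('c) (sdi_dist TYPE('c) :: ('r, 'v) cq \<Rightarrow> ('r, 'v) cq \<Rightarrow> real)
    \<and> (\<forall>q1 q2 q3 :: ('r, 'v) cq. wf_cq q1 \<and> wf_cq q2 \<and> wf_cq q3 \<and>
          cq_arity q1 = cq_arity q2 \<and> cq_arity q2 = cq_arity q3 \<longrightarrow>
          sdi_dist TYPE('c) q1 q3 \<le> max (sdi_dist TYPE('c) q1 q2) (sdi_dist TYPE('c) q2 q3))"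
proof -
  have tri: "sdi_dist TYPE('c) q1 q2 \<le> sdi_dist TYPE('c) q1 q3 + sdi_dist TYPE('c) q3 q2"
    if "wf_cq q1" "wf_cq q2" "wf_cq q3" for q1 q2 q3 :: "('r,'v) cq"
    using sdi_ultra[OF that(1,3,2), where 'c='c] sdi_nonneg[of "TYPE('c)" q1 q3]
      sdi_nonneg[of "TYPE('c)" q3 q2] by linarith
  show ?thesis
    unfolding semantic_distance_metric_def
  proof (intro conjI allI impI)
    fix q1 q2 :: "('r,'v) cq"
    assume h: "wf_cq q1 \<and> wf_cq q2 \<and> cq_arity q1 = cq_arity q2"
    show "sdi_dist TYPE('c) q1 q2 \<ge> 0" by (rule sdi_nonneg)
    show "sdi_dist TYPE('c) q1 q2 = sdi_dist TYPE('c) q2 q1" by (rule sdi_sym)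
    show "sdi_dist TYPE('c) q1 q2 = 0 \<longleftrightarrow> cq_equivalent TYPE('c) q1 q2"
      using h sdi_zero[of q1 q2] by simp
  next
    fix q1 q2 q3 :: "('r,'v) cq"
    assume h: "wf_cq q1 \<and> wf_cq q2 \<and> wf_cq q3 \<and> cq_arity q1 = cq_arity q2 \<and> cq_arity q3 = cq_arity q1"
    show "sdi_dist TYPE('c) q1 q2 \<le> sdi_dist TYPE('c) q1 q3 + sdi_dist TYPE('c) q3 q2"
      using h tri[of q1 q2 q3] by simp
  next
    fix q1 q2 q3 :: "('r,'v) cq"
    assume h: "wf_cq q1 \<and> wf_cq q2 \<and> wf_cq q3 \<and> cq_arity q1 = cq_arity q2 \<and> cq_arity q2 = cq_arity q3"
    show "sdi_dist TYPE('c) q1 q3 \<le> max (sdi_dist TYPE('c) q1 q2) (sdi_dist TYPE('c) q2 q3)"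
      using h sdi_ultra[of q1 q2 q3] by simp
  qed
qed

end
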